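(* Let $H$ be a Hilbert space and $L:H\to[0,\infty)$ of class $C^2$, and assume that for some $c>0$, $$|\nabla L(x)|\ge c\,\frac{\sqrt{L(x)}}{1+|x|}\quad\text{for all }x\in H.$$ Let $(x_t)_{t\ge0}$ solve $\dot x(t)=-\nabla L(x(t))$ with $x(0)=0$. Then there exists $x_\infty\in H$ with $|x_\infty|\le e^{\frac2c\sqrt{L(0)}}-1$, $L(x_\infty)=0$ and $\lim_{t\to\infty}x(t)=x_\infty$. *)

theory Defs
  imports "HOL-Analysis.Analysis"
begin

end

theory Submission
  imports Defs
begin

lemma aux_eq: fixes q S N c :: real assumes "q > 0" "S \<ge> 0"
  shows "inverse q / 2 * (- (N^2)) + c/2 * (1/(1+S) * (0 + N)) = (c*q*N - N*(1+S)*N) / (2*q*(1+S))"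
  using assms by (simp add: divide_simps power2_eq_square) (simp add: algebra_simps)

theorem corollary2p5:
  fixes L :: "'a::{real_inner,complete_space} \<Rightarrow> real"
    and gradL :: "'a \<Rightarrow> 'a"
    and D2L :: "'a \<Rightarrow> ('a \<Rightarrow>\<^sub>L 'a)"
    and x :: "real \<Rightarrow> 'a"
    and c :: real
  assumes L_nonneg: "\<And>y. L y \<ge> 0"
    and L_grad: "\<And>y. (L has_derivative (\<lambda>h. gradL y \<bullet> h)) (at y)"
    and grad_diff: "\<And>y. (gradL has_derivative blinfun_apply (D2L y)) (at y)"
    and D2L_cont: "continuous_on UNIV D2L"
    and c_pos: "c > 0"
    and loj: "\<And>y. norm (gradL y) \<ge> c * sqrt (L y) / (1 + norm y)"
    and flow: "\<And>t. t \<ge> 0 \<Longrightarrow> (x has_vector_derivative - gradL (x t)) (at t within {0..})"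
    and init: "x 0 = 0"
  shows "\<exists>x_inf. norm x_inf \<le> exp (2 / c * sqrt (L 0)) - 1 \<and> L x_inf = 0
                \<and> (x \<longlongrightarrow> x_inf) at_top"
proof -
  define n where "n t = norm (gradL (x t))" for t
  define B where "B = exp (2 / c * sqrt (L 0)) - 1"
  have B_nonneg: "0 \<le> B" unfolding B_def using L_nonneg c_pos by simp
  have gradL_cont: "continuous_on UNIV gradL"
    using grad_diff has_derivative_continuous continuous_at_imp_continuous_on by blast
  have L_cont: "continuous_on UNIV L"
    using L_grad has_derivative_continuous continuous_at_imp_continuous_on by blast
  have x_cont: "continuous_on {0..} x"
    unfolding continuous_on_eq_continuous_within
    using has_vector_derivative_continuous[OF flow] by auto
  have gx_cont: "continuous_on {0..} (\<lambda>t. gradL (x t))"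
    using continuous_on_compose2[OF gradL_cont x_cont] by auto
  have n_cont: "continuous_on {0..} n"
    unfolding n_def using continuous_on_norm[OF gx_cont] .
  have Lx_cont: "continuous_on {0..} (\<lambda>t. L (x t))"
    using continuous_on_compose2[OF L_cont x_cont] by auto
  have xd: "(x has_vector_derivative - gradL (x t)) (at t)" if "t > 0" for t
  proof -
    have "t \<in> interior {0..}"
      by (rule interiorI[of "{0<..}"]) (use that in auto)
    then have "at t within {0..} = at t" by (rule at_within_interior)
    then show ?thesis using flow[of t] that by simp
  qed
  have Lxd: "((\<lambda>t. L (x t)) has_real_derivative (- ((n t)^2))) (at t)" if "t > 0" for t
  proof -
    have "((L \<circ> x) has_derivative ((\<lambda>h. gradL (x t) \<bullet> h) \<circ> (\<lambda>h. h *\<^sub>R (- gradL (x t))))) (at t)"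
      using diff_chain_at[OF xd[OF that, unfolded has_vector_derivative_def] L_grad] .
    moreover have "((\<lambda>h. gradL (x t) \<bullet> h) \<circ> (\<lambda>h. h *\<^sub>R (- gradL (x t)))) = (*) (- ((n t)^2))"
      by (auto simp: n_def fun_eq_iff power2_norm_eq_inner)
    ultimately show ?thesis by (simp add: has_field_derivative_def o_def)
  qed
  have Lx_mono: "L (x b) \<le> L (x a)" if "0 \<le> a" "a \<le> b" for a b
  proof (rule DERIV_nonpos_imp_decreasing_open[of a b "\<lambda>t. L (x t)"])
    show "continuous_on {a..b} (\<lambda>t. L (x t))"
      using continuous_on_subset[OF Lx_cont] that by auto
    fix t assume "a < t" "t < b"
    then show "\<exists>y. ((\<lambda>t. L (x t)) has_real_derivative y) (at t) \<and> y \<le> 0"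
      using Lxd[of t] that by auto
  qed (use that in auto)
  have grad0: "gradL y = 0" if "L y = 0" for y
  proof -
    have "(\<lambda>h. gradL y \<bullet> h) = (\<lambda>h. 0)"
      by (rule has_derivative_local_min[OF L_grad]) (use that L_nonneg in auto)
    then have "gradL y \<bullet> gradL y = 0" by metis
    then show ?thesis by simp
  qed
  define s where "s t = integral {0..t} n" for t
  have n_int: "n integrable_on {a..b}" if "0 \<le> a" for a b
    by (intro integrable_continuous_interval continuous_on_subset[OF n_cont]) (use that in auto)
  have s_diff: "s b - s a = integral {a..b} n" if "0 \<le> a" "a \<le> b" for a b
    using Henstock_Kurzweil_Integration.integral_combine[where a=0 and c=a and b=b and f=n] n_int[of 0 b] that unfolding s_def by auto
  have n_nonneg: "0 \<le> n t" for t unfolding n_def by simp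
  have s_mono: "s a \<le> s b" if "0 \<le> a" "a \<le> b" for a b
    using s_diff[OF that] integral_nonneg[OF n_int[OF that(1)], of b] n_nonneg by auto
  have s0: "s 0 = 0" unfolding s_def by simp
  have s_nonneg: "0 \<le> s t" if "0 \<le> t" for t using s_mono[OF _ that] s0 by simp
  have s_cont: "continuous_on {0..T} s" for T
    unfolding s_def using indefinite_integral_continuous_1[OF n_int[of 0 T]] by simp
  have sd: "(s has_real_derivative n t) (at t)" if "t > 0" for t
  proof -
    have "(s has_real_derivative n t) (at t within {0..t+1})"
      unfolding s_def using integral_has_real_derivative[of 0 "t+1" n t] continuous_on_subset[OF n_cont] that by auto
    moreover have "at t within {0..t+1} = at t" by (rule at_within_interior) (use that in auto)
    ultimately show ?thesis by simp
  qed
  have xs: "norm (x b - x a) \<le> s b - s a" if ab: "0 \<le> a" "a \<le> b" for a b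
  proof -
    define u where "u = x b - x a"
    define phi where "phi t = u \<bullet> x t - norm u * s t" for t
    have "phi b \<le> phi a"
    proof (rule DERIV_nonpos_imp_decreasing_open[OF ab(2)])
      have xc: "continuous_on {a..b} x" using continuous_on_subset[OF x_cont] ab by auto
      show "continuous_on {a..b} phi" unfolding phi_def
        by (intro continuous_intros xc continuous_on_subset[OF s_cont[of b]]) (use ab in auto)
      fix t assume t: "a < t" "t < b"
      then have t0: "t > 0" using ab by simp
      have d1: "((\<lambda>t. u \<bullet> x t) has_real_derivative (u \<bullet> (- gradL (x t)))) (at t)"
      proof -
        have "((\<lambda>t. u \<bullet> x t) has_derivative (\<lambda>h. u \<bullet> (h *\<^sub>R (- gradL (x t))))) (at t)"
          using has_derivative_inner_right[OF xd[OF t0, unfolded has_vector_derivative_def]] .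
        moreover have "(\<lambda>h. u \<bullet> (h *\<^sub>R (- gradL (x t)))) = (*) (u \<bullet> (- gradL (x t)))"
          by (auto simp: fun_eq_iff)
        ultimately show ?thesis by (simp add: has_field_derivative_def)
      qed
      have dphi: "(phi has_real_derivative (u \<bullet> (- gradL (x t))) - norm u * n t) (at t)"
        unfolding phi_def by (intro DERIV_diff d1 DERIV_cmult sd t0)
      have "u \<bullet> (- gradL (x t)) \<le> norm u * n t"
        unfolding n_def using norm_cauchy_schwarz[of u "- gradL (x t)"] by simp
      then show "\<exists>y. (phi has_real_derivative y) (at t) \<and> y \<le> 0" using dphi by auto
    qed
    then have "u \<bullet> u \<le> norm u * (s b - s a)" unfolding phi_def u_def by (simp add: inner_diff_right algebra_simps)
    then have *: "norm u * norm u \<le> norm u * (s b - s a)" by (simp add: power2_norm_eq_inner[symmetric] power2_eq_square)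
    show ?thesis
    proof (cases "norm u = 0")
      case True then show ?thesis using s_mono[OF ab] u_def by simp
    next
      case False then have "norm u > 0" by simp
      then show ?thesis using * u_def by simp
    qed
  qed
  have xs0: "norm (x t) \<le> s t" if "0 \<le> t" for t
    using xs[OF _ that] init s0 by simp
  have key: "s T \<le> B" if T0: "0 \<le> T" and pos: "\<forall>t. 0 \<le> t \<and> t < T \<longrightarrow> L (x t) > 0" for T
  proof -
    define h where "h t = sqrt (L (x t)) + c/2 * ln (1 + s t)" for t
    have "h T \<le> h 0"
    proof (rule DERIV_nonpos_imp_decreasing_open[OF T0])
      show "continuous_on {0..T} h" unfolding h_def
        by (intro continuous_intros continuous_on_subset[OF Lx_cont] s_cont) (auto simp: s_nonneg add_nonneg_eq_0_iff)
      fix t assume t: "0 < t" "t < T"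
      then have Lpos: "L (x t) > 0" using pos by auto
      define q where "q = sqrt (L (x t))"
      have qpos: "q > 0" unfolding q_def using Lpos by simp
      have St: "0 \<le> s t" using s_nonneg t by simp
      have d1: "((\<lambda>t. sqrt (L (x t))) has_real_derivative (inverse q / 2) * (- ((n t)^2))) (at t)"
        unfolding q_def using DERIV_chain2[OF DERIV_real_sqrt[OF Lpos] Lxd[of t]] t by simp
      have d2: "((\<lambda>t. ln (1 + s t)) has_real_derivative (1 / (1 + s t)) * (0 + n t)) (at t)"
        using DERIV_chain2[OF DERIV_ln_divide[of "1 + s t"] DERIV_add[OF DERIV_const sd[of t]]] t St by simp
      have dh: "(h has_real_derivative (inverse q / 2) * (- ((n t)^2)) + c/2 * ((1 / (1 + s t)) * (0 + n t))) (at t)"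
        unfolding h_def by (rule DERIV_add[OF d1 DERIV_cmult[OF d2]])
      have "c * q / (1 + s t) \<le> c * q / (1 + norm (x t))"
        by (rule divide_left_mono) (use xs0[of t] t c_pos qpos St in \<open>auto intro!: mult_pos_pos add_pos_nonneg\<close>)
      also have "\<dots> \<le> n t" unfolding n_def q_def using loj[of "x t"] .
      finally have "c * q \<le> n t * (1 + s t)" using St by (simp add: divide_le_eq)
      then have "c * q * n t \<le> n t * (1 + s t) * n t"
        by (rule mult_right_mono) (simp add: n_nonneg)
      then have hh: "c * q * n t - n t * (1 + s t) * n t \<le> 0" by simp
      have "(inverse q / 2) * (- ((n t)^2)) + c/2 * ((1 / (1 + s t)) * (0 + n t))
            = (c * q * n t - n t * (1 + s t) * n t) / (2 * q * (1 + s t))"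
        using aux_eq[OF qpos St] .
      also have "\<dots> \<le> 0"
        by (rule divide_nonpos_pos[OF hh]) (use qpos St in simp)
      finally have "(inverse q / 2) * (- ((n t)^2)) + c/2 * ((1 / (1 + s t)) * (0 + n t)) \<le> 0" .
      then show "\<exists>y. (h has_real_derivative y) (at t) \<and> y \<le> 0" using dh by blast
    qed
    moreover have "h 0 = sqrt (L 0)" unfolding h_def using init s0 by simp
    moreover have "c/2 * ln (1 + s T) \<le> h T" unfolding h_def using L_nonneg[of "x T"] by simp
    ultimately have "c/2 * ln (1 + s T) \<le> sqrt (L 0)" by linarith
    then have "ln (1 + s T) \<le> 2 / c * sqrt (L 0)" using c_pos by (simp add: field_simps)
    then have "exp (ln (1 + s T)) \<le> exp (2 / c * sqrt (L 0))" by simp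
    then show ?thesis unfolding B_def using s_nonneg[OF T0] by simp
  qed
  have sB: "s T \<le> B" if T0: "0 \<le> T" for T
  proof (cases "\<forall>t. 0 \<le> t \<and> t < T \<longrightarrow> L (x t) > 0")
    case True then show ?thesis using key T0 by blast
  next
    case False
    define Z where "Z = {t \<in> {0..T}. L (x t) = 0}"
    have "closed Z" unfolding Z_def
      by (rule continuous_closed_preimage_constant) (use continuous_on_subset[OF Lx_cont] in auto)
    moreover have "Z \<noteq> {}" using False L_nonneg unfolding Z_def
      by (metis (mono_tags, lifting) atLeastAtMost_iff empty_iff le_less mem_Collect_eq order_less_imp_le)
    moreover have bdd: "bdd_below Z" unfolding Z_def by (auto intro: bdd_belowI[of _ 0])
    ultimately have t0Z: "Inf Z \<in> Z" using closed_contains_Inf by blast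
    define t0 where "t0 = Inf Z"
    have t0: "0 \<le> t0" "t0 \<le> T" "L (x t0) = 0" using t0Z unfolding t0_def Z_def by auto
    have "\<forall>t. 0 \<le> t \<and> t < t0 \<longrightarrow> L (x t) > 0"
    proof (intro allI impI)
      fix t assume t: "0 \<le> t \<and> t < t0"
      show "L (x t) > 0"
      proof (rule ccontr)
        assume "\<not> L (x t) > 0"
        then have "t \<in> Z" unfolding Z_def using t t0 L_nonneg[of "x t"] by auto
        then have "t0 \<le> t" unfolding t0_def using cInf_lower[OF _ bdd] by blast
        then show False using t by simp
      qed
    qed
    then have "s t0 \<le> B" using key t0 by blast
    moreover have "n t = 0" if "t \<in> {t0..T}" for t
    proof -
      have "L (x t) \<le> L (x t0)" using Lx_mono[of t0 t] that t0 by auto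
      then have "L (x t) = 0" using t0 L_nonneg[of "x t"] by simp
      then show ?thesis unfolding n_def using grad0 by simp
    qed
    then have "integral {t0..T} n = 0" using integral_cong[of "{t0..T}" n "\<lambda>_. 0"] by simp
    ultimately show ?thesis using s_diff[of t0 T] t0 by simp
  qed
  define S where "S = Sup (s ` {0..})"
  have bddS: "bdd_above (s ` {0..})" using sB by (auto intro: bdd_aboveI[of _ B])
  have sS: "s t \<le> S" if "0 \<le> t" for t unfolding S_def using cSup_upper[OF _ bddS] that by auto
  have "cauchy_filter (filtermap x at_top)"
    unfolding cauchy_filter_metric_filtermap
  proof (intro allI impI)
    fix e :: real assume e: "e > 0"
    have "S - e < S" using e by simp
    then obtain v where v: "v \<in> s ` {0..}" "S - e < v" using less_cSupE[of "S - e" "s ` {0..}"] unfolding S_def by auto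
    then obtain T where T: "0 \<le> T" "S - e < s T" by auto
    have "dist (x a) (x b) < e" if "T \<le> a" "T \<le> b" for a b
    proof -
      have *: "norm (x q - x p) < e" if "T \<le> p" "p \<le> q" for p q
      proof -
        have "norm (x q - x p) \<le> s q - s p" using xs[of p q] that T by auto
        also have "\<dots> \<le> S - s T" using sS[of q] s_mono[of T p] that T by auto
        finally show ?thesis using T by simp
      qed
      show ?thesis
      proof (cases "a \<le> b")
        case True then show ?thesis using *[of a b] that by (simp add: dist_norm norm_minus_commute)
      next
        case False then show ?thesis using *[of b a] that by (simp add: dist_norm)
      qed
    qed
    then show "\<exists>P. eventually P at_top \<and> (\<forall>a b. P a \<and> P b \<longrightarrow> dist (x a) (x b) < e)"
      by (intro exI[of _ "\<lambda>a. T \<le> a"]) (auto simp: eventually_at_top_linorder)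
  qed
  then obtain xi where "filtermap x at_top \<le> nhds xi"
    using cauchy_filter_complete_converges[OF _ complete_UNIV, of "filtermap x at_top"] by (auto simp: filtermap_bot_iff)
  then have lim: "(x \<longlongrightarrow> xi) at_top" by (simp add: filterlim_def)
  have evB: "eventually (\<lambda>t. norm (x t) \<le> B) at_top"
    using eventually_ge_at_top[of 0] by eventually_elim (use xs0 sB in \<open>auto intro: order_trans\<close>)
  have xiB: "norm xi \<le> B"
    by (rule tendsto_upperbound[OF tendsto_norm[OF lim] evB]) simp
  have Llim: "((\<lambda>t. L (x t)) \<longlongrightarrow> L xi) at_top"
    using continuous_on_tendsto_compose[OF L_cont lim] by auto
  have "L xi = 0"
  proof (rule ccontr)
    assume "L xi \<noteq> 0"
    then have m: "L xi > 0" using L_nonneg[of xi] by simp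
    have Lge: "L xi \<le> L (x t)" if "0 \<le> t" for t
      by (rule tendsto_upperbound[OF Llim]) 
         (use eventually_mono[OF eventually_ge_at_top[of t]] Lx_mono[OF that] in auto)
    define d where "d = c * sqrt (L xi) / (1 + B)"
    have dpos: "d > 0" unfolding d_def using c_pos m B_nonneg by simp
    have nd: "d \<le> n t" if "0 \<le> t" for t
    proof -
      have "d \<le> c * sqrt (L (x t)) / (1 + norm (x t))"
        unfolding d_def
        apply (rule frac_le)
        using c_pos m Lge[OF that] xs0[OF that] sB[OF that] by (auto intro: add_pos_nonneg)
      also have "\<dots> \<le> n t" unfolding n_def by (rule loj)
      finally show ?thesis .
    qed
    define T where "T = (B + 1) / d"
    have T0: "0 \<le> T" unfolding T_def using dpos B_nonneg by simp
    have "integral {0..T} (\<lambda>_. d) \<le> integral {0..T} n"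
      by (rule integral_le) (use n_int nd in auto)
    then have "T * d \<le> s T" unfolding s_def using T0 by simp
    then have "B + 1 \<le> s T" unfolding T_def using dpos by simp
    then show False using sB[OF T0] by simp
  qed
  then show ?thesis using xiB lim unfolding B_def by blast
qed

end
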